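(* Let $a>0$, $l>0$, $b,c\in\mathbb R$, and suppose there is $c_0>0$ with $(ak^2+bk+c)^{1/2}\ge l+c_0k$ for all integers $k\ge1$. Then $$\lim_{s\to0^+}\sum_{k=1}^\infty\left(\frac1{\big((ak^2+bk+c)^{1/2}-l\big)^s}-\frac1{\big((ak^2+bk+c)^{1/2}+l\big)^s}\right)=\frac{2l}{\sqrt a}.$$ *)

theory Defs
  imports "HOL-Analysis.Analysis"
begin

end

theory Submission
  imports Defs
begin

lemma powr_diff_bounds:
  fixes s x y :: real
  assumes s: "s > 0" and x: "0 < x" and xy: "x < y"
  shows "s*(y-x)* y powr (-s-1) \<le> x powr (-s) - y powr (-s)"
    and "x powr (-s) - y powr (-s) \<le> s*(y-x)* x powr (-s-1)"
proof -
  have "\<exists>z. x < z \<and> z < y \<and> ((\<lambda>t. t powr (-s)) y - (\<lambda>t. t powr (-s)) x = (y - x) * ((-s) * z powr (-s - 1)))"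
    apply (rule MVT2[OF xy])
    using has_real_derivative_powr[of _ "-s"] x by simp
  then obtain z where z: "x < z" "z < y" and eq: "y powr (-s) - x powr (-s) = (y - x) * ((-s) * z powr (-s - 1))" by auto
  have e: "x powr (-s) - y powr (-s) = s*(y-x)* z powr (-s-1)" using eq by (simp add: algebra_simps)
  have m1: "y powr (-s-1) \<le> z powr (-s-1)" using powr_mono2'[of "-s-1" z y] z x s by simp
  have m2: "z powr (-s-1) \<le> x powr (-s-1)" using powr_mono2'[of "-s-1" x z] z x s by simp
  have p: "s*(y-x) \<ge> 0" using s xy by simp
  show "s*(y-x)* y powr (-s-1) \<le> x powr (-s) - y powr (-s)"
    unfolding e using mult_left_mono[OF m1 p] by simp
  show "x powr (-s) - y powr (-s) \<le> s*(y-x)* x powr (-s-1)"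
    unfolding e using mult_left_mono[OF m2 p] by simp
qed


lemma filterlim_lin:
  fixes sa C :: real
  assumes "sa > 0"
  shows "filterlim (\<lambda>k::nat. sa * real k + C) at_top sequentially"
proof -
  have "filterlim (\<lambda>k::nat. sa * real k) at_top sequentially"
    using filterlim_tendsto_pos_mult_at_top[OF tendsto_const assms filterlim_real_sequentially] by blast
  from filterlim_tendsto_add_at_top[OF tendsto_const[of C] this] show ?thesis by (simp add: add.commute)
qed

lemma filterlim_lin_shift:
  fixes sa C :: real
  assumes "sa > 0"
  shows "filterlim (\<lambda>k::nat. sa * real (k + K) + C) at_top sequentially"
  using filterlim_lin[OF assms, of "C + sa * real K"] by (simp add: algebra_simps)

lemma filterlim_lin_Suc:
  fixes sa C :: real
  assumes "sa > 0"
  shows "filterlim (\<lambda>k::nat. sa * real (Suc k) + C) at_top sequentially"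
  using filterlim_lin_shift[OF assms, of 1 C] by simp

theorem mainTheorem13:
  fixes a l b c c0 :: real
  assumes "a > 0" and "l > 0" and "c0 > 0"
    and "\<And>k::nat. k \<ge> 1 \<Longrightarrow> sqrt (a * real k ^ 2 + b * real k + c) \<ge> l + c0 * real k"
  defines "F \<equiv> (\<lambda>s::real. \<lambda>k::nat.
      1 / (sqrt (a * real (Suc k) ^ 2 + b * real (Suc k) + c) - l) powr s
    - 1 / (sqrt (a * real (Suc k) ^ 2 + b * real (Suc k) + c) + l) powr s)"
  shows "(\<forall>\<^sub>F s in at_right 0. summable (F s))
     \<and> ((\<lambda>s. \<Sum>k. F s k) \<longlongrightarrow> 2 * l / sqrt a) (at_right 0)"
proof -
  define sa where "sa = sqrt a"
  have sa: "sa > 0" "sa * sa = a" using assms(1) by (auto simp: sa_def)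
  define D where "D = (\<bar>b\<bar> + \<bar>c\<bar> + 1) / sa + \<bar>c\<bar> + 1"
  have D1: "D \<ge> 1" "D \<ge> \<bar>c\<bar> + 1" using sa by (auto simp: D_def)
  have saD: "sa * D \<ge> \<bar>b\<bar> + \<bar>c\<bar> + 1"
  proof -
    have "sa * D = (\<bar>b\<bar> + \<bar>c\<bar> + 1) + sa * (\<bar>c\<bar> + 1)" using sa by (simp add: D_def field_simps)
    moreover have "sa * (\<bar>c\<bar> + 1) \<ge> 0" using sa by simp
    ultimately show ?thesis by linarith
  qed
  define R where "R k = sqrt (a * real (Suc k) ^ 2 + b * real (Suc k) + c)" for k :: nat
  have Rl: "R k \<ge> l + c0 * real (Suc k)" for k unfolding R_def using assms(4)[of "Suc k"] by simp
  have Rl0: "R k - l > 0" for k proof -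
    have "c0 * real (Suc k) > 0" using assms(3) by simp
    thus ?thesis using Rl[of k] by simp
  qed
  have Rup: "R k \<le> sa * real (Suc k) + D" for k
  proof -
    define n where "n = real (Suc k)"
    have n1: "n \<ge> 1" by (simp add: n_def)
    have "a * n ^ 2 + b * n + c \<le> (sa * n + D) ^ 2"
    proof -
      have e: "(sa * n + D) ^ 2 = a * n^2 + 2 * (sa * D) * n + D * D"
        using sa by (simp add: power2_eq_square algebra_simps)
      have "b * n \<le> 2 * (sa * D) * n"
      proof -
        have "b \<le> 2 * (sa * D)" using saD abs_ge_self[of b] abs_ge_zero[of c] by linarith
        thus ?thesis using n1 by (intro mult_right_mono) auto
      qed
      moreover have "c \<le> D * D"
      proof -
        have "D * 1 \<le> D * D" using D1 by (intro mult_left_mono) auto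
        thus ?thesis using D1 abs_ge_self[of c] by linarith
      qed
      ultimately show ?thesis unfolding e by simp
    qed
    moreover have "sa * n + D \<ge> 0" using sa n1 D1 by simp
    ultimately show ?thesis unfolding R_def n_def[symmetric] by (intro real_le_lsqrt) auto
  qed
  have Rlo: "R k \<ge> sa * real (Suc k) - D" for k
  proof (cases "sa * real (Suc k) - D \<le> 0")
    case True
    have "R k \<ge> 0" using Rl0[of k] assms(2) by simp
    thus ?thesis using True by simp
  next
    case False
    define n where "n = real (Suc k)"
    have n1: "n \<ge> 1" by (simp add: n_def)
    have DL: "D < sa * n" using False by (simp add: n_def)
    have "(sa * n - D) ^ 2 \<le> a * n ^ 2 + b * n + c"
    proof -
      have e: "(sa * n - D) ^ 2 = a * n^2 - 2 * (sa * D) * n + D * D"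
        using sa by (simp add: power2_eq_square algebra_simps)
      have "D * D \<le> D * (sa * n)" using DL D1 by (intro mult_left_mono) auto
      moreover have "(\<bar>b\<bar> + \<bar>c\<bar> + 1) * n \<le> (sa * D) * n" using saD n1 by (intro mult_right_mono) auto
      moreover have "\<bar>c\<bar> \<le> \<bar>c\<bar> * n" using n1 by (metis abs_ge_zero mult_le_cancel_left1 not_less)
      moreover have "- \<bar>b\<bar> * n \<le> b * n" using n1 by (intro mult_right_mono) auto
      moreover have "D * (sa * n) = (sa * D) * n" by simp
      moreover have "(\<bar>b\<bar> + \<bar>c\<bar> + 1) * n = \<bar>b\<bar> * n + \<bar>c\<bar> * n + n" by (simp add: algebra_simps)
      moreover have "- \<bar>b\<bar> * n = - (\<bar>b\<bar> * n)" by simp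
      moreover have "- \<bar>c\<bar> \<le> c" by simp
      ultimately show ?thesis unfolding e using n1 by linarith
    qed
    thus ?thesis unfolding R_def n_def[symmetric] by (rule real_le_rsqrt)
  qed
  have Fe: "F s k = (R k - l) powr (-s) - (R k + l) powr (-s)" for s k
    unfolding F_def R_def by (simp add: powr_minus_divide)
  define C where "C = D + l"
  have Cpos: "C > 0" using D1 assms(2) by (simp add: C_def)
  define p where "p s k = (sa * real (Suc k) + C) powr (-s)" for s :: real and k :: nat
  define T where "T s k = 2 * l / sa * (p s k - p s (Suc k))" for s k
  have Flow: "F s k \<ge> T s k" and F0: "F s k \<ge> 0" if s: "s > 0" for s k
  proof -
    have h1: "s * (2*l) * (R k + l) powr (-s-1) \<le> F s k"
      using powr_diff_bounds(1)[OF s Rl0[of k], of "R k + l"] assms(2) unfolding Fe by simp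
    have h2: "(sa * real (Suc k) + C) powr (-s-1) \<le> (R k + l) powr (-s-1)"
      using Rup[of k] Rl0[of k] assms(2) s by (intro powr_mono2') (auto simp: C_def)
    have x0: "sa * real (Suc k) + C > 0" proof -
      have "sa * real (Suc k) \<ge> 0" using sa by simp
      thus ?thesis using Cpos by linarith
    qed
    have h3: "p s k - p s (Suc k) \<le> s * sa * (sa * real (Suc k) + C) powr (-s-1)"
      using powr_diff_bounds(2)[OF s x0, of "sa * real (Suc k) + C + sa"] sa unfolding p_def
      by (simp add: algebra_simps)
    have "T s k \<le> 2 * l / sa * (s * sa * (sa * real (Suc k) + C) powr (-s-1))"
      unfolding T_def using h3 sa assms(2) by (intro mult_left_mono) auto
    also have "\<dots> = s * (2*l) * (sa * real (Suc k) + C) powr (-s-1)" using sa by simp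
    also have "\<dots> \<le> s * (2*l) * (R k + l) powr (-s-1)" using h2 s assms(2) by (intro mult_left_mono) auto
    finally show "F s k \<ge> T s k" using h1 by simp
    show "F s k \<ge> 0" proof -
      have "s * (2*l) * (R k + l) powr (-s-1) \<ge> 0" using s assms(2) by simp
      thus ?thesis using h1 by linarith
    qed
  qed
  have Tsums: "T s sums (2 * l / sa * p s 0)" if s: "s > 0" for s
  proof -
    have "p s \<longlonglongrightarrow> 0" unfolding p_def
      using tendsto_neg_powr[of "-s", OF _ filterlim_lin_Suc[OF sa(1)]] s by simp
    from sums_mult[OF telescope_sums'[OF this], of "2 * l / sa"] show ?thesis
      unfolding T_def by simp
  qed
  define E where "E = D + l"
  obtain K :: nat where K: "E / sa < real K" using reals_Archimedean2 by blast
  have KE: "sa * real K - E > 0" using K sa by (simp add: field_simps)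
  define v where "v s n = (sa * real (n + K) - E) powr (-s)" for s :: real and n :: nat
  define U where "U s n = 2 * l / sa * (v s n - v s (Suc n))" for s n
  have Fup: "F s (n + K) \<le> U s n" if s: "s > 0" for s n
  proof -
    have h1: "F s (n+K) \<le> s * (2*l) * (R (n+K) - l) powr (-s-1)"
      using powr_diff_bounds(2)[OF s Rl0[of "n+K"], of "R (n+K) + l"] assms(2) unfolding Fe by simp
    have x0: "sa * real (n + K) - E > 0" proof -
      have "sa * real K \<le> sa * real (n + K)" using sa by (intro mult_left_mono) auto
      thus ?thesis using KE by linarith
    qed
    have y0: "sa * real (Suc (n + K)) - E > 0" using x0 sa by (simp add: distrib_left)
    have h2: "(R (n+K) - l) powr (-s-1) \<le> (sa * real (Suc (n + K)) - E) powr (-s-1)"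
      using Rlo[of "n+K"] y0 s by (intro powr_mono2') (auto simp: E_def)
    have h3: "s * sa * (sa * real (Suc (n + K)) - E) powr (-s-1) \<le> v s n - v s (Suc n)"
      using powr_diff_bounds(1)[OF s x0, of "sa * real (n + K) - E + sa"] sa unfolding v_def
      by (simp add: algebra_simps)
    have "s * (2*l) * (R (n+K) - l) powr (-s-1) \<le> s * (2*l) * (sa * real (Suc (n + K)) - E) powr (-s-1)"
      using h2 s assms(2) by (intro mult_left_mono) auto
    also have "\<dots> = 2 * l / sa * (s * sa * (sa * real (Suc (n + K)) - E) powr (-s-1))" using sa by simp
    also have "\<dots> \<le> U s n" unfolding U_def using h3 sa assms(2) by (intro mult_left_mono) auto
    finally show ?thesis using h1 by simp
  qed
  have Usums: "U s sums (2 * l / sa * v s 0)" if s: "s > 0" for s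
  proof -
    have "v s \<longlonglongrightarrow> 0" unfolding v_def
      using tendsto_neg_powr[of "-s", OF _ filterlim_lin_shift[OF sa(1), of K "-E"]] s by simp
    from sums_mult[OF telescope_sums'[OF this], of "2 * l / sa"] show ?thesis
      unfolding U_def by simp
  qed
  have summ: "summable (F s)" if s: "s > 0" for s
  proof -
    have "summable (\<lambda>n. F s (n + K))"
      using summable_comparison_test'[OF sums_summable[OF Usums[OF s]], of 0 "\<lambda>n. F s (n + K)"]
        Fup[OF s] F0[OF s] by simp
    thus ?thesis by simp
  qed
  have lowb: "2 * l / sa * p s 0 \<le> (\<Sum>k. F s k)" if s: "s > 0" for s
    using suminf_le[OF Flow[OF s] sums_summable[OF Tsums[OF s]] summ[OF s]] sums_unique[OF Tsums[OF s]]
    by simp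
  have upb: "(\<Sum>k. F s k) \<le> (\<Sum>i<K. F s i) + 2 * l / sa * v s 0" if s: "s > 0" for s
  proof -
    have "(\<Sum>n. F s (n + K)) \<le> (\<Sum>n. U s n)"
      using summ[OF s] Usums[OF s] Fup[OF s] by (intro suminf_le) (auto simp: sums_iff)
    thus ?thesis using suminf_split_initial_segment[OF summ[OF s], of K] sums_unique[OF Usums[OF s]]
      by simp
  qed
  have ev: "\<forall>\<^sub>F s in at_right (0::real). s > 0" by (rule eventually_at_right_less)
  have lim1: "((\<lambda>s. 2 * l / sa * p s 0) \<longlongrightarrow> 2 * l / sa) (at_right 0)"
  proof -
    have "((\<lambda>s::real. 2*l/sa * (sa * real (Suc 0) + C) powr (-s)) \<longlongrightarrow> 2*l/sa * (sa * real (Suc 0) + C) powr (-0)) (at_right 0)"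
      using sa Cpos by (intro tendsto_intros) auto
    thus ?thesis using sa Cpos unfolding p_def by simp
  qed
  have lim2: "((\<lambda>s. (\<Sum>i<K. F s i) + 2 * l / sa * v s 0) \<longlongrightarrow> 2 * l / sa) (at_right 0)"
  proof -
    have "((\<lambda>s. (\<Sum>i<K. F s i) + 2 * l / sa * v s 0) \<longlongrightarrow> (\<Sum>i<K. 0) + 2 * l / sa * (sa * real (0 + K) - E) powr (-0)) (at_right 0)"
    proof (intro tendsto_add tendsto_sum)
      fix i
      have "((\<lambda>s::real. (R i - l) powr (-s) - (R i + l) powr (-s)) \<longlongrightarrow> (R i - l) powr (-0) - (R i + l) powr (-0)) (at_right 0)"
        using Rl0[of i] assms(2) by (intro tendsto_intros) auto
      thus "((\<lambda>s. F s i) \<longlongrightarrow> 0) (at_right 0)" using Rl0[of i] assms(2) unfolding Fe by simp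
    next
      show "((\<lambda>s. 2 * l / sa * v s 0) \<longlongrightarrow> 2 * l / sa * (sa * real (0 + K) - E) powr (-0)) (at_right 0)"
        unfolding v_def using KE by (intro tendsto_intros) auto
    qed
    thus ?thesis using KE by simp
  qed
  show ?thesis
  proof
    show "\<forall>\<^sub>F s in at_right 0. summable (F s)" using ev by eventually_elim (rule summ)
    show "((\<lambda>s. \<Sum>k. F s k) \<longlongrightarrow> 2 * l / sqrt a) (at_right 0)"
      unfolding sa_def[symmetric]
    proof (rule tendsto_sandwich[OF _ _ lim1 lim2])
      show "\<forall>\<^sub>F s in at_right 0. 2 * l / sa * p s 0 \<le> (\<Sum>k. F s k)"
        using ev by eventually_elim (rule lowb)
      show "\<forall>\<^sub>F s in at_right 0. (\<Sum>k. F s k) \<le> (\<Sum>i<K. F s i) + 2 * l / sa * v s 0"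
        using ev by eventually_elim (rule upb)
    qed
  qed
qed

end
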